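(* Let $G$ be an NC-spectrum graph with nodes $x_0,\dots,x_k,y_k,\dots,y_0$, and let $M$, $\mathrm{lce}$ and $\mathrm{dia}$ be as defined in the context. Given the values $\mathrm{lce}(z)$ and $\mathrm{dia}(z)$ for all nodes $z$ (each accessible in $O(1)$ time), any entry $M(i,j)$, $0\le i,j\le k$, can be computed in $O(1)$ time.
   Context: Fix a finite set $\mathcal{R}$ of positive reals (the amino acid masses). A real $m$ is an amino-acid mass sum if $m=r_1+\cdots+r_t$ for some $t\ge1$, $r_i\in\mathcal{R}$ (repetitions allowed). Given a peptide mass $W$ and $k$ ion masses $w_1,\dots,w_k$, the NC-spectrum graph $G=(V,E)$ has vertex set $V=\{N_0,\dots,N_k,C_0,\dots,C_k\}$ with coordinates $\mathrm{cord}(N_0)=0$, $\mathrm{cord}(C_0)=W-18$, $\mathrm{cord}(N_j)=w_j-1$, $\mathrm{cord}(C_j)=W-w_j$ ($1\le j\le k$); for $j\ge1$, $N_j,C_j$ are derived from the $j$-th ion. There is an edge from $u$ to $v$ ($E(u,v)=1$, else $0$) iff $u,v$ are not derived from the same ion, $\mathrm{cord}(u)<\mathrm{cord}(v)$, and $\mathrm{cord}(v)-\mathrm{cord}(u)$ is an amino-acid mass sum. The nodes are listed in increasing coordinate order as $x_0,\dots,x_k,y_k,\dots,y_0$, with $x_0=N_0$, $y_0=C_0$ and $\{x_j,y_j\}$ the pair derived from one ion ($j\ge1$); every edge goes from a node to a later node in this list. The table $M$: for $0\le i,j\le k$, $M(i,j)=1$ if there exist a directed path $L$ from $x_0$ to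 $x_i$ and a directed path $R$ from $y_j$ to $y_0$ (a path may be a single node) such that $L\cup R$ contains exactly one of $x_p$ and $y_p$ for every $1\le p\le\max(i,j)$, and $M(i,j)=0$ otherwise. For $0\le i\le k$: $\mathrm{lce}(x_i)=j-i$ where $j\ge i$ is the largest index with $E(x_i,x_{i+1})=\dots=E(x_{j-1},x_j)=1$ (so $j=k$ or $E(x_j,x_{j+1})=0$); $\mathrm{lce}(y_i)=i-j$ where $j\le i$ is the smallest index with $E(y_i,y_{i-1})=\dots=E(y_{j+1},y_j)=1$ (so $j=0$ or $E(y_j,y_{j-1})=0$). Also $\mathrm{dia}(x_j)=M(j,j-1)$ and $\mathrm{dia}(y_j)=M(j-1,j)$ for $0<j\le k$, and $\mathrm{dia}(x_0)=\mathrm{dia}(y_0)=1$. *)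

theory Defs
  imports Complex_Main
begin

datatype node = N nat | C nat

text \<open>Amino-acid mass sum: a nonempty finite sum of elements of Rm (repetitions allowed).\<close>
definition aa_sum :: "real set \<Rightarrow> real \<Rightarrow> bool" where
  "aa_sum Rm m \<longleftrightarrow> (\<exists>rs. rs \<noteq> [] \<and> set rs \<subseteq> Rm \<and> m = sum_list rs)"

text \<open>Coordinates, for peptide mass W and ion masses w 1, ..., w k.\<close>
fun cord :: "real \<Rightarrow> (nat \<Rightarrow> real) \<Rightarrow> node \<Rightarrow> real" where
  "cord W w (N j) = (if j = 0 then 0 else w j - 1)"
| "cord W w (C j) = (if j = 0 then W - 18 else W - w j)"

definition Vset :: "nat \<Rightarrow> node set" where
  "Vset k = {N j | j. j \<le> k} \<union> {C j | j. j \<le> k}"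

text \<open>u and v are derived from the same ion (ions are numbered 1..k).\<close>
definition same_ion :: "node \<Rightarrow> node \<Rightarrow> bool" where
  "same_ion u v \<longleftrightarrow> (\<exists>j\<ge>1. u \<in> {N j, C j} \<and> v \<in> {N j, C j})"

definition NCedge :: "real set \<Rightarrow> real \<Rightarrow> (nat \<Rightarrow> real) \<Rightarrow> nat \<Rightarrow> node \<Rightarrow> node \<Rightarrow> bool" where
  "NCedge Rm W w k u v \<longleftrightarrow> u \<in> Vset k \<and> v \<in> Vset k \<and> \<not> same_ion u v
     \<and> cord W w u < cord W w v \<and> aa_sum Rm (cord W w v - cord W w u)"

definition is_path :: "(node \<Rightarrow> node \<Rightarrow> bool) \<Rightarrow> node \<Rightarrow> node \<Rightarrow> node list \<Rightarrow> bool" where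
  "is_path E u v ps \<longleftrightarrow> ps \<noteq> [] \<and> hd ps = u \<and> last ps = v
     \<and> (\<forall>t. Suc t < length ps \<longrightarrow> E (ps ! t) (ps ! Suc t))"

definition NC_listing :: "real \<Rightarrow> (nat \<Rightarrow> real) \<Rightarrow> nat \<Rightarrow> (nat \<Rightarrow> node) \<Rightarrow> (nat \<Rightarrow> node) \<Rightarrow> bool" where
  "NC_listing W w k x y \<longleftrightarrow>
     x 0 = N 0 \<and> y 0 = C 0 \<and>
     (\<exists>\<sigma>. bij_betw \<sigma> {1..k} {1..k} \<and>
        (\<forall>j\<in>{1..k}. (x j = N (\<sigma> j) \<and> y j = C (\<sigma> j)) \<or> (x j = C (\<sigma> j) \<and> y j = N (\<sigma> j)))) \<and>
     (\<forall>i<k. cord W w (x i) < cord W w (x (Suc i))) \<and>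
     cord W w (x k) < cord W w (y k) \<and>
     (\<forall>i<k. cord W w (y (Suc i)) < cord W w (y i))"

definition Mtab :: "(node \<Rightarrow> node \<Rightarrow> bool) \<Rightarrow> (nat \<Rightarrow> node) \<Rightarrow> (nat \<Rightarrow> node) \<Rightarrow> nat \<Rightarrow> nat \<Rightarrow> bool" where
  "Mtab E x y i j \<longleftrightarrow> (\<exists>L R. is_path E (x 0) (x i) L \<and> is_path E (y j) (y 0) R \<and>
     (\<forall>p\<in>{1..max i j}. (x p \<in> set L \<union> set R) \<noteq> (y p \<in> set L \<union> set R)))"

definition lce_x :: "(node \<Rightarrow> node \<Rightarrow> bool) \<Rightarrow> (nat \<Rightarrow> node) \<Rightarrow> nat \<Rightarrow> nat \<Rightarrow> nat" where
  "lce_x E x k i = (GREATEST j. i \<le> j \<and> j \<le> k \<and> (\<forall>t. i \<le> t \<and> t < j \<longrightarrow> E (x t) (x (Suc t)))) - i"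

definition lce_y :: "(node \<Rightarrow> node \<Rightarrow> bool) \<Rightarrow> (nat \<Rightarrow> node) \<Rightarrow> nat \<Rightarrow> nat" where
  "lce_y E y i = i - (LEAST j. j \<le> i \<and> (\<forall>t. j \<le> t \<and> t < i \<longrightarrow> E (y (Suc t)) (y t)))"

definition dia_x :: "(node \<Rightarrow> node \<Rightarrow> bool) \<Rightarrow> (nat \<Rightarrow> node) \<Rightarrow> (nat \<Rightarrow> node) \<Rightarrow> nat \<Rightarrow> bool" where
  "dia_x E x y j = (if j = 0 then True else Mtab E x y j (j - 1))"

definition dia_y :: "(node \<Rightarrow> node \<Rightarrow> bool) \<Rightarrow> (nat \<Rightarrow> node) \<Rightarrow> (nat \<Rightarrow> node) \<Rightarrow> nat \<Rightarrow> bool" where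
  "dia_y E x y j = (if j = 0 then True else Mtab E x y (j - 1) j)"

end

theory Submission
  imports Defs
begin

lemma path_mono:
  assumes "is_path E u v ps" "\<forall>a b. E a b \<longrightarrow> c a < (c b::real)" "s < t" "t < length ps"
  shows "c (ps!s) < c (ps!t)"
  using assms(3,4)
proof (induction t)
  case 0 then show ?case by simp
next
  case (Suc t)
  have "E (ps!t) (ps!Suc t)" using assms(1) Suc.prems unfolding is_path_def by auto
  hence "c (ps!t) < c (ps!Suc t)" using assms(2) by blast
  then show ?case using Suc by (cases "s = t") auto
qed

lemma path_ends:
  assumes "is_path E u v ps" shows "u \<in> set ps" "v \<in> set ps"
  using assms unfolding is_path_def by auto

lemma path_bounds:
  assumes "is_path E u v ps" "\<forall>a b. E a b \<longrightarrow> c a < (c b::real)" "z \<in> set ps"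
  shows "c u \<le> c z \<and> c z \<le> c v"
proof -
  obtain s where s: "s < length ps" "ps!s = z" by (meson in_set_conv_nth assms(3))
  have ne: "ps \<noteq> []" using assms(1) unfolding is_path_def by auto
  have u: "ps!0 = u" using assms(1) ne unfolding is_path_def by (simp add: hd_conv_nth)
  have v: "ps!(length ps - 1) = v" using assms(1) ne unfolding is_path_def by (simp add: last_conv_nth)
  have "c u \<le> c z"
  proof (cases "s = 0")
    case True then show ?thesis using u s by simp
  next
    case False then show ?thesis using path_mono[OF assms(1,2), where s="0" and t="s"] u s by simp
  qed
  moreover have "c z \<le> c v"
  proof (cases "s = length ps - 1")
    case True then show ?thesis using v s by simp
  next
    case False
    then have "s < length ps - 1" using s by simp
    then show ?thesis using path_mono[OF assms(1,2), where s="s" and t="length ps - 1"] v s ne by fastforce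
  qed
  ultimately show ?thesis by simp
qed

lemma path_consec:
  assumes "is_path E u v ps" "\<forall>a b. E a b \<longrightarrow> c a < (c b::real)"
    "a \<in> set ps" "b \<in> set ps" "c a < c b" "\<forall>z\<in>set ps. \<not> (c a < c z \<and> c z < c b)"
  shows "E a b"
proof -
  obtain t where t: "t < length ps" "ps!t = a" by (meson in_set_conv_nth assms(3))
  obtain s where s: "s < length ps" "ps!s = b" by (meson in_set_conv_nth assms(4))
  have "t < s"
  proof (rule ccontr)
    assume "\<not> t < s"
    hence "s = t \<or> s < t" by auto
    then show False
    proof
      assume "s = t" then show False using s t assms(5) by simp
    next
      assume "s < t" then show False using path_mono[OF assms(1,2) _ t(1)] s t assms(5) by force
    qed
  qed
  have e: "E (ps!t) (ps!Suc t)" using assms(1) \<open>t < s\<close> s unfolding is_path_def by auto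
  show ?thesis
  proof (cases "Suc t = s")
    case True then show ?thesis using e s t by simp
  next
    case False
    hence "Suc t < s" using \<open>t < s\<close> by simp
    hence "c (ps!Suc t) < c b" using path_mono[OF assms(1,2) _ s(1)] s by simp
    moreover have "c a < c (ps!Suc t)" using assms(2) e t by blast
    moreover have "ps!Suc t \<in> set ps" using \<open>Suc t < s\<close> s by simp
    ultimately show ?thesis using assms(6) by blast
  qed
qed

lemma path_in_V:
  assumes "is_path E u v ps" "\<And>a b. E a b \<Longrightarrow> P a \<and> P b" "P u" "z \<in> set ps"
  shows "P z"
proof -
  obtain s where s: "s < length ps" "ps!s = z" by (meson in_set_conv_nth assms(4))
  show ?thesis
  proof (cases s)
    case 0 then show ?thesis using assms(1,3) s unfolding is_path_def by (metis hd_conv_nth)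
  next
    case (Suc s')
    then have "E (ps!s') (ps!s)" using assms(1) s unfolding is_path_def by auto
    then show ?thesis using assms(2) s by blast
  qed
qed

lemma path_snoc:
  assumes "is_path E u v ps" "E v z" shows "is_path E u z (ps @ [z])"
proof -
  have ne: "ps \<noteq> []" and h: "hd ps = u" and l: "last ps = v"
    and e: "\<And>t. Suc t < length ps \<Longrightarrow> E (ps ! t) (ps ! Suc t)"
    using assms(1) unfolding is_path_def by auto
  have "E ((ps @ [z]) ! t) ((ps @ [z]) ! Suc t)" if t: "Suc t < length (ps @ [z])" for t
  proof (cases "Suc t < length ps")
    case True then show ?thesis using e[OF True] by (simp add: nth_append)
  next
    case False
    then have tt: "t = length ps - 1" using t by simp
    have "ps ! t = v" using l ne tt by (simp add: last_conv_nth)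
    then show ?thesis using assms(2) tt ne by (simp add: nth_append)
  qed
  then show ?thesis unfolding is_path_def using ne h by simp
qed

lemma path_cons:
  assumes "is_path E u v ps" "E z u" shows "is_path E z v (z # ps)"
proof -
  have ne: "ps \<noteq> []" and h: "hd ps = u" and l: "last ps = v"
    and e: "\<And>t. Suc t < length ps \<Longrightarrow> E (ps ! t) (ps ! Suc t)"
    using assms(1) unfolding is_path_def by auto
  have "E ((z # ps) ! t) ((z # ps) ! Suc t)" if t: "Suc t < length (z # ps)" for t
  proof (cases t)
    case 0 then show ?thesis using assms(2) h ne by (simp add: hd_conv_nth)
  next
    case (Suc t') then show ?thesis using e[of t'] t by simp
  qed
  then show ?thesis unfolding is_path_def using ne l by simp
qed

lemma path_take:
  assumes "is_path E u v ps" "t < length ps" shows "is_path E u (ps!t) (take (Suc t) ps)"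
proof -
  have ne: "ps \<noteq> []" and h: "hd ps = u"
    and e: "\<And>t. Suc t < length ps \<Longrightarrow> E (ps ! t) (ps ! Suc t)"
    using assms(1) unfolding is_path_def by auto
  have 1: "take (Suc t) ps \<noteq> []" using ne by simp
  have 2: "hd (take (Suc t) ps) = u" using h ne by simp
  have 3: "last (take (Suc t) ps) = ps ! t"
  proof -
    have "take (Suc t) ps = take t ps @ [ps ! t]" using assms(2) by (simp add: take_Suc_conv_app_nth)
    then show ?thesis by simp
  qed
  have 4: "E (take (Suc t) ps ! s) (take (Suc t) ps ! Suc s)" if "Suc s < length (take (Suc t) ps)" for s
    using that e[of s] assms(2) by simp
  show ?thesis unfolding is_path_def using 1 2 3 4 by blast
qed

lemma path_drop:
  assumes "is_path E u v ps" "t < length ps" shows "is_path E (ps!t) v (drop t ps)"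
proof -
  have ne: "ps \<noteq> []" and l: "last ps = v"
    and e: "\<And>t. Suc t < length ps \<Longrightarrow> E (ps ! t) (ps ! Suc t)"
    using assms(1) unfolding is_path_def by auto
  have 1: "drop t ps \<noteq> []" using assms(2) by simp
  have 2: "hd (drop t ps) = ps ! t" using assms(2) by (simp add: hd_drop_conv_nth)
  have 3: "last (drop t ps) = v" using l assms(2) by simp
  have 4: "E (drop t ps ! s) (drop t ps ! Suc s)" if "Suc s < length (drop t ps)" for s
    using that e[of "t + s"] assms(2) by simp
  show ?thesis unfolding is_path_def using 1 2 3 4 by blast
qed

lemma path_take_set:
  assumes "is_path E u v ps" "\<forall>a b. E a b \<longrightarrow> c a < (c b::real)" "t < length ps"
    "z \<in> set ps" "c z \<le> c (ps!t)"
  shows "z \<in> set (take (Suc t) ps)"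
proof -
  obtain s where s: "s < length ps" "ps!s = z" by (meson in_set_conv_nth assms(4))
  have "s \<le> t" using path_mono[OF assms(1,2), where s="t" and t="s"] s assms(5) by force
  then have "take (Suc t) ps ! s = z" "s < length (take (Suc t) ps)" using s assms(3) by auto
  then show ?thesis by (metis nth_mem)
qed

lemma path_drop_set:
  assumes "is_path E u v ps" "\<forall>a b. E a b \<longrightarrow> c a < (c b::real)" "t < length ps"
    "z \<in> set ps" "c (ps!t) \<le> c z"
  shows "z \<in> set (drop t ps)"
proof -
  obtain s where s: "s < length ps" "ps!s = z" by (meson in_set_conv_nth assms(4))
  have "t \<le> s" using path_mono[OF assms(1,2), where s="s" and t="t"] s assms(5) assms(3) by force
  then have "drop t ps ! (s - t) = z" "s - t < length (drop t ps)" using s by auto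
  then show ?thesis by (metis nth_mem)
qed

lemma extend_fwd:
  assumes "is_path E u (f a) ps" "\<And>t. a \<le> t \<Longrightarrow> t < b \<Longrightarrow> E (f t) (f (Suc t))" "a \<le> b"
  shows "\<exists>ps'. is_path E u (f b) ps' \<and> set ps' = set ps \<union> f ` {Suc a..b}"
  using assms(2,3)
proof (induction b)
  case 0 then show ?case using assms(1) by auto
next
  case (Suc b)
  show ?case
  proof (cases "a = Suc b")
    case True then show ?thesis using assms(1) by auto
  next
    case False
    hence ab: "a \<le> b" using Suc.prems by simp
    obtain ps' where ps': "is_path E u (f b) ps'" "set ps' = set ps \<union> f ` {Suc a..b}"
      using Suc ab by auto
    have "is_path E u (f (Suc b)) (ps' @ [f (Suc b)])" using path_snoc[OF ps'(1)] Suc.prems ab by simp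
    moreover have "{Suc a..Suc b} = insert (Suc b) {Suc a..b}" using ab by auto
    ultimately show ?thesis using ps'(2) by (intro exI[of _ "ps' @ [f (Suc b)]"]) auto
  qed
qed

lemma extend_bwd:
  assumes "is_path E (f a) v ps" "\<And>t. a \<le> t \<Longrightarrow> t < b \<Longrightarrow> E (f (Suc t)) (f t)" "a \<le> b"
  shows "\<exists>ps'. is_path E (f b) v ps' \<and> set ps' = set ps \<union> f ` {Suc a..b}"
  using assms(2,3)
proof (induction b)
  case 0 then show ?case using assms(1) by auto
next
  case (Suc b)
  show ?case
  proof (cases "a = Suc b")
    case True then show ?thesis using assms(1) by auto
  next
    case False
    hence ab: "a \<le> b" using Suc.prems by simp
    obtain ps' where ps': "is_path E (f b) v ps'" "set ps' = set ps \<union> f ` {Suc a..b}"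
      using Suc ab by auto
    have "is_path E (f (Suc b)) v (f (Suc b) # ps')" using path_cons[OF ps'(1)] Suc.prems ab by simp
    moreover have "{Suc a..Suc b} = insert (Suc b) {Suc a..b}" using ab by auto
    ultimately show ?thesis using ps'(2) by (intro exI[of _ "f (Suc b) # ps'"]) auto
  qed
qed

lemma chain_mono:
  assumes "\<forall>i<k. (a::nat\<Rightarrow>real) i < a (Suc i)" "p < q" "q \<le> k"
  shows "a p < a q"
  using assms(2,3)
proof (induction q)
  case 0 then show ?case by simp
next
  case (Suc q)
  show ?case
  proof (cases "p = q")
    case True then show ?thesis using assms(1) Suc.prems by auto
  next
    case False then have "a p < a q" using Suc by auto
    moreover have "a q < a (Suc q)" using assms(1) Suc.prems by simp
    ultimately show ?thesis by simp
  qed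
qed

lemma lce_x_ge:
  assumes "Suc j \<le> i" "i \<le> k"
  shows "(i - Suc j \<le> lce_x E x k (Suc j)) = (\<forall>t. Suc j \<le> t \<and> t < i \<longrightarrow> E (x t) (x (Suc t)))"
proof -
  define P where "P g = (Suc j \<le> g \<and> g \<le> k \<and> (\<forall>t. Suc j \<le> t \<and> t < g \<longrightarrow> E (x t) (x (Suc t))))" for g
  have l: "lce_x E x k (Suc j) = Greatest P - Suc j" unfolding lce_x_def P_def by simp
  have P0: "P (Suc j)" using assms unfolding P_def by auto
  have bd: "\<forall>y. P y \<longrightarrow> y \<le> k" unfolding P_def by auto
  have PG: "P (Greatest P)" using GreatestI_nat[of P, OF P0] bd by blast
  show ?thesis
  proof
    assume "i - Suc j \<le> lce_x E x k (Suc j)"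
    hence "i \<le> Greatest P" using l assms PG unfolding P_def by auto
    then show "\<forall>t. Suc j \<le> t \<and> t < i \<longrightarrow> E (x t) (x (Suc t))" using PG unfolding P_def by auto
  next
    assume "\<forall>t. Suc j \<le> t \<and> t < i \<longrightarrow> E (x t) (x (Suc t))"
    hence "P i" using assms unfolding P_def by auto
    hence "i \<le> Greatest P" using Greatest_le_nat[of P] bd by blast
    then show "i - Suc j \<le> lce_x E x k (Suc j)" using l by simp
  qed
qed

lemma lce_y_ge:
  assumes "Suc i \<le> j"
  shows "(j - Suc i \<le> lce_y E y j) = (\<forall>t. Suc i \<le> t \<and> t < j \<longrightarrow> E (y (Suc t)) (y t))"
proof -
  define P where "P m = (m \<le> j \<and> (\<forall>t. m \<le> t \<and> t < j \<longrightarrow> E (y (Suc t)) (y t)))" for m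
  define m where "m = Least P"
  have l: "lce_y E y j = j - m" unfolding lce_y_def P_def m_def by simp
  have P0: "P j" unfolding P_def by auto
  have PL: "P m" unfolding m_def using LeastI[of P, OF P0] .
  have m1: "m \<le> j" and m2: "\<forall>t. m \<le> t \<and> t < j \<longrightarrow> E (y (Suc t)) (y t)" using PL unfolding P_def by simp_all
  show ?thesis
  proof
    assume "j - Suc i \<le> lce_y E y j"
    then have "m \<le> Suc i" using l assms m1 by linarith
    then show "\<forall>t. Suc i \<le> t \<and> t < j \<longrightarrow> E (y (Suc t)) (y t)" using m2 by simp
  next
    assume "\<forall>t. Suc i \<le> t \<and> t < j \<longrightarrow> E (y (Suc t)) (y t)"
    hence "P (Suc i)" using assms unfolding P_def by auto
    hence "m \<le> Suc i" unfolding m_def by (rule Least_le)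
    then show "j - Suc i \<le> lce_y E y j" using l by simp
  qed
qed

theorem lemma3:
  fixes Rm :: "real set" and W :: real and w :: "nat \<Rightarrow> real" and k :: nat
    and x y :: "nat \<Rightarrow> node"
  assumes "finite Rm" and "\<forall>r\<in>Rm. r > 0"
    and "NC_listing W w k x y"
    and "E = NCedge Rm W w k"
    and "i \<le> k" and "j \<le> k"
  shows "Mtab E x y i j =
     (if i = j then i = 0
      else if j < i then dia_x E x y (Suc j) \<and> i - Suc j \<le> lce_x E x k (Suc j)
      else dia_y E x y (Suc i) \<and> j - Suc i \<le> lce_y E y j)"
proof -
  define c where "c = cord W w"
  have Emono: "\<forall>a b. E a b \<longrightarrow> c a < c b" using assms(4) unfolding NCedge_def c_def by auto
  have EV: "\<And>a b. E a b \<Longrightarrow> a \<in> Vset k \<and> b \<in> Vset k" using assms(4) unfolding NCedge_def by auto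
  obtain \<sigma> where x0: "x 0 = N 0" and y0: "y 0 = C 0" and sig: "bij_betw \<sigma> {1..k} {1..k}"
    and xy: "\<forall>j\<in>{1..k}. (x j = N (\<sigma> j) \<and> y j = C (\<sigma> j)) \<or> (x j = C (\<sigma> j) \<and> y j = N (\<sigma> j))"
    and hx: "\<forall>i<k. c (x i) < c (x (Suc i))" and hxy: "c (x k) < c (y k)"
    and hy: "\<forall>i<k. c (y (Suc i)) < c (y i)"
    using assms(3) unfolding NC_listing_def c_def by blast
  have xlt: "\<And>p q. p < q \<Longrightarrow> q \<le> k \<Longrightarrow> c (x p) < c (x q)" using chain_mono[OF hx] by blast
  have hy': "\<forall>i<k. (\<lambda>i. - c (y i)) i < (\<lambda>i. - c (y i)) (Suc i)" using hy by simp
  have ylt: "\<And>p q. p < q \<Longrightarrow> q \<le> k \<Longrightarrow> c (y q) < c (y p)"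
    using chain_mono[OF hy'] by fastforce
  have xle: "\<And>p q. p \<le> q \<Longrightarrow> q \<le> k \<Longrightarrow> c (x p) \<le> c (x q)"
    by (metis xlt order.order_iff_strict order_refl)
  have yle: "\<And>p q. p \<le> q \<Longrightarrow> q \<le> k \<Longrightarrow> c (y q) \<le> c (y p)"
    by (metis ylt order.order_iff_strict order_refl)
  have xylt: "\<And>p q. p \<le> k \<Longrightarrow> q \<le> k \<Longrightarrow> c (x p) < c (y q)"
  proof -
    fix p q assume "p \<le> k" "q \<le> k"
    then have "c (x p) \<le> c (x k)" "c (y k) \<le> c (y q)" using xle yle by auto
    then show "c (x p) < c (y q)" using hxy by simp
  qed
  have xV: "\<And>p. p \<le> k \<Longrightarrow> x p \<in> Vset k \<and> y p \<in> Vset k"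
  proof -
    fix p assume p: "p \<le> k"
    show "x p \<in> Vset k \<and> y p \<in> Vset k"
    proof (cases "p = 0")
      case True then show ?thesis using x0 y0 unfolding Vset_def by auto
    next
      case False
      then have "p \<in> {1..k}" using p by auto
      then have "\<sigma> p \<in> {1..k}" using sig by (meson bij_betwE)
      then show ?thesis using xy \<open>p \<in> {1..k}\<close> unfolding Vset_def by fastforce
    qed
  qed
  have cover: "\<And>z. z \<in> Vset k \<Longrightarrow> \<exists>m\<le>k. z = x m \<or> z = y m"
  proof -
    fix z assume z: "z \<in> Vset k"
    then obtain m where m: "m \<le> k" "z = N m \<or> z = C m" unfolding Vset_def by auto
    show "\<exists>m\<le>k. z = x m \<or> z = y m"
    proof (cases "m = 0")
      case True then show ?thesis using m x0 y0 by auto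
    next
      case False
      then have "m \<in> {1..k}" using m by auto
      then obtain q where q: "q \<in> {1..k}" "\<sigma> q = m" using sig by (metis bij_betw_imp_surj_on imageE)
      then show ?thesis using xy m by fastforce
    qed
  qed
  have betx: "\<And>n z. n < k \<Longrightarrow> z \<in> Vset k \<Longrightarrow> \<not> (c (x n) < c z \<and> c z < c (x (Suc n)))"
  proof
    fix n z assume n: "n < k" and z: "z \<in> Vset k" and b: "c (x n) < c z \<and> c z < c (x (Suc n))"
    obtain m where m: "m \<le> k" "z = x m \<or> z = y m" using cover[OF z] by blast
    show False
    proof (cases "z = x m")
      case True
      show False
      proof (cases "m \<le> n")
        case True then show False using xle[of m n] n b \<open>z = x m\<close> by simp
      next
        case False then show False using xle[of "Suc n" m] m b \<open>z = x m\<close> by simp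
      qed
    next
      case False then have "z = y m" using m by simp
      then show False using xylt[of "Suc n" m] m n b by simp
    qed
  qed
  have bety: "\<And>n z. n < k \<Longrightarrow> z \<in> Vset k \<Longrightarrow> \<not> (c (y (Suc n)) < c z \<and> c z < c (y n))"
  proof
    fix n z assume n: "n < k" and z: "z \<in> Vset k" and b: "c (y (Suc n)) < c z \<and> c z < c (y n)"
    obtain m where m: "m \<le> k" "z = x m \<or> z = y m" using cover[OF z] by blast
    show False
    proof (cases "z = y m")
      case True
      show False
      proof (cases "m \<le> n")
        case True then show False using yle[of m n] n b \<open>z = y m\<close> by simp
      next
        case False then show False using yle[of "Suc n" m] m b \<open>z = y m\<close> by simp
      qed
    next
      case False then have "z = x m" using m by simp
      then show False using xylt[of m "Suc n"] m n b by simp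
    qed
  qed
  have Lb: "\<And>L z a. is_path E (x 0) (x a) L \<Longrightarrow> z \<in> set L \<Longrightarrow> c z \<le> c (x a)"
    using path_bounds Emono by blast
  have Rb: "\<And>R z a. is_path E (y a) (y 0) R \<Longrightarrow> z \<in> set R \<Longrightarrow> c (y a) \<le> c z"
    using path_bounds Emono by blast
  have LV: "\<And>L z a. is_path E (x 0) (x a) L \<Longrightarrow> z \<in> set L \<Longrightarrow> z \<in> Vset k"
    using path_in_V[where P="\<lambda>z. z \<in> Vset k"] EV xV by blast
  have RV: "\<And>R z a. a \<le> k \<Longrightarrow> is_path E (y a) (y 0) R \<Longrightarrow> z \<in> set R \<Longrightarrow> z \<in> Vset k"
    using path_in_V[where P="\<lambda>z. z \<in> Vset k"] EV xV by blast
  consider (eq) "i = j" | (gt) "j < i" | (lt) "i < j" by linarith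
  then show ?thesis
  proof cases
    case eq
    show ?thesis
    proof (cases "i = 0")
      case True
      have "is_path E (x 0) (x 0) [x 0]" "is_path E (y 0) (y 0) [y 0]" unfolding is_path_def by auto
      then have "Mtab E x y i j" using True eq unfolding Mtab_def by force
      then show ?thesis using eq True by simp
    next
      case False
      have "\<not> Mtab E x y i j"
      proof
        assume "Mtab E x y i j"
        then obtain L R where L: "is_path E (x 0) (x i) L" and R: "is_path E (y j) (y 0) R"
          and D: "\<forall>p\<in>{1..max i j}. (x p \<in> set L \<union> set R) \<noteq> (y p \<in> set L \<union> set R)"
          unfolding Mtab_def by blast
        have "i \<in> {1..max i j}" using False eq by auto
        then show False using D path_ends(2)[OF L] path_ends(1)[OF R] eq by auto
      qed
      then show ?thesis using eq False by simp
    qed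
  next
    case gt
    have yL: "\<And>L p. is_path E (x 0) (x i) L \<Longrightarrow> p \<le> k \<Longrightarrow> y p \<notin> set L"
      using Lb xylt assms(5) by fastforce
    have xR: "\<And>R p. is_path E (y j) (y 0) R \<Longrightarrow> p \<le> k \<Longrightarrow> x p \<notin> set R"
      using Rb xylt assms(6) by fastforce
    have yR: "\<And>R p. is_path E (y j) (y 0) R \<Longrightarrow> j < p \<Longrightarrow> p \<le> k \<Longrightarrow> y p \<notin> set R"
      using Rb ylt by fastforce
    have "Mtab E x y i j = (Mtab E x y (Suc j) j \<and> (\<forall>t. Suc j \<le> t \<and> t < i \<longrightarrow> E (x t) (x (Suc t))))"
    proof
      assume "Mtab E x y i j"
      then obtain L R where L: "is_path E (x 0) (x i) L" and R: "is_path E (y j) (y 0) R"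
        and D: "\<forall>p\<in>{1..max i j}. (x p \<in> set L \<union> set R) \<noteq> (y p \<in> set L \<union> set R)"
        unfolding Mtab_def by blast
      have inL: "\<And>p. Suc j \<le> p \<Longrightarrow> p \<le> i \<Longrightarrow> x p \<in> set L"
      proof -
        fix p assume p: "Suc j \<le> p" "p \<le> i"
        then have "p \<in> {1..max i j}" by auto
        moreover have "y p \<notin> set L" "y p \<notin> set R" "x p \<notin> set R"
          using yL[OF L] yR[OF R] xR[OF R] p assms(5) by auto
        ultimately show "x p \<in> set L" using D by blast
      qed
      have chain: "\<forall>t. Suc j \<le> t \<and> t < i \<longrightarrow> E (x t) (x (Suc t))"
      proof (intro allI impI)
        fix t assume t: "Suc j \<le> t \<and> t < i"
        show "E (x t) (x (Suc t))"
        proof (rule path_consec[OF L Emono])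
          show "x t \<in> set L" "x (Suc t) \<in> set L" using inL t by auto
          show "c (x t) < c (x (Suc t))" using hx t assms(5) by auto
          show "\<forall>z\<in>set L. \<not> (c (x t) < c z \<and> c z < c (x (Suc t)))"
            using betx LV[OF L] t assms(5) by auto
        qed
      qed
      have "x (Suc j) \<in> set L" using inL gt by auto
      then obtain t where t: "t < length L" "L ! t = x (Suc j)" by (meson in_set_conv_nth)
      define L' where "L' = take (Suc t) L"
      have L': "is_path E (x 0) (x (Suc j)) L'" using path_take[OF L t(1)] t L'_def by simp
      have sub: "set L' \<subseteq> set L" unfolding L'_def by (rule set_take_subset)
      have "Mtab E x y (Suc j) j" unfolding Mtab_def
      proof (intro exI conjI ballI)
        show "is_path E (x 0) (x (Suc j)) L'" by (rule L')
        show "is_path E (y j) (y 0) R" by (rule R)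
        fix p assume p: "p \<in> {1..max (Suc j) j}"
        show "(x p \<in> set L' \<union> set R) \<noteq> (y p \<in> set L' \<union> set R)"
        proof (cases "p = Suc j")
          case True
          then have "x p \<in> set L'" using path_ends(2)[OF L'] by simp
          moreover have "y p \<notin> set L'" "y p \<notin> set R" using yL[OF L] yR[OF R] sub True gt assms(5) by auto
          ultimately show ?thesis by blast
        next
          case False
          then have pj: "p \<le> j" "1 \<le> p" using p by auto
          then have "p \<in> {1..max i j}" using gt by auto
          then have Dp: "(x p \<in> set L \<union> set R) \<noteq> (y p \<in> set L \<union> set R)" using D by blast
          have "x p \<in> set L \<Longrightarrow> x p \<in> set L'"
            unfolding L'_def using path_take_set[OF L Emono t(1)] t xle[of p "Suc j"] pj gt assms(5) by simp
          then have "(x p \<in> set L' \<union> set R) = (x p \<in> set L \<union> set R)" using sub by blast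
          moreover have "(y p \<in> set L' \<union> set R) = (y p \<in> set L \<union> set R)"
            using sub yL[OF L, of p] pj gt assms(5) by auto
          ultimately show ?thesis using Dp by simp
        qed
      qed
      then show "Mtab E x y (Suc j) j \<and> (\<forall>t. Suc j \<le> t \<and> t < i \<longrightarrow> E (x t) (x (Suc t)))"
        using chain by simp
    next
      assume "Mtab E x y (Suc j) j \<and> (\<forall>t. Suc j \<le> t \<and> t < i \<longrightarrow> E (x t) (x (Suc t)))"
      then obtain L' R where L': "is_path E (x 0) (x (Suc j)) L'" and R: "is_path E (y j) (y 0) R"
        and D: "\<forall>p\<in>{1..max (Suc j) j}. (x p \<in> set L' \<union> set R) \<noteq> (y p \<in> set L' \<union> set R)"
        and chain: "\<forall>t. Suc j \<le> t \<and> t < i \<longrightarrow> E (x t) (x (Suc t))"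
        unfolding Mtab_def by blast
      obtain L where L: "is_path E (x 0) (x i) L" and sL: "set L = set L' \<union> x ` {Suc (Suc j)..i}"
        using extend_fwd[of E "x 0" x "Suc j" L' i] L' chain gt by auto
      show "Mtab E x y i j" unfolding Mtab_def
      proof (intro exI conjI ballI)
        show "is_path E (x 0) (x i) L" by (rule L)
        show "is_path E (y j) (y 0) R" by (rule R)
        fix p assume p: "p \<in> {1..max i j}"
        show "(x p \<in> set L \<union> set R) \<noteq> (y p \<in> set L \<union> set R)"
        proof (cases "p \<le> Suc j")
          case True
          then have Dp: "(x p \<in> set L' \<union> set R) \<noteq> (y p \<in> set L' \<union> set R)" using D p by auto
          have "x p \<notin> x ` {Suc (Suc j)..i}"
          proof
            assume "x p \<in> x ` {Suc (Suc j)..i}"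
            then obtain q where "q \<in> {Suc (Suc j)..i}" "x p = x q" by blast
            then show False using xlt[of p q] True assms(5) by auto
          qed
          moreover have "y p \<notin> x ` {Suc (Suc j)..i}"
          proof
            assume "y p \<in> x ` {Suc (Suc j)..i}"
            then obtain q where "q \<in> {Suc (Suc j)..i}" "y p = x q" by blast
            then show False using xylt[of q p] True gt assms(5) by auto
          qed
          ultimately show ?thesis using Dp sL by auto
        next
          case False
          then have "x p \<in> set L" using sL p by auto
          moreover have "y p \<notin> set L" using yL[OF L] p gt assms(5) by auto
          moreover have "y p \<notin> set R" using yR[OF R] p False assms(5) by auto
          ultimately show ?thesis by blast
        qed
      qed
    qed
    then show ?thesis using gt lce_x_ge[of j i k E x] assms(5) unfolding dia_x_def by auto
  next
    case lt
    have yL: "\<And>L p. is_path E (x 0) (x i) L \<Longrightarrow> p \<le> k \<Longrightarrow> y p \<notin> set L"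
      using Lb xylt assms(5) by fastforce
    have xR: "\<And>R p a. a \<le> k \<Longrightarrow> is_path E (y a) (y 0) R \<Longrightarrow> p \<le> k \<Longrightarrow> x p \<notin> set R"
      using Rb xylt by fastforce
    have xL: "\<And>L p. is_path E (x 0) (x i) L \<Longrightarrow> i < p \<Longrightarrow> p \<le> k \<Longrightarrow> x p \<notin> set L"
      using Lb xlt by fastforce
    have "Mtab E x y i j = (Mtab E x y i (Suc i) \<and> (\<forall>t. Suc i \<le> t \<and> t < j \<longrightarrow> E (y (Suc t)) (y t)))"
    proof
      assume "Mtab E x y i j"
      then obtain L R where L: "is_path E (x 0) (x i) L" and R: "is_path E (y j) (y 0) R"
        and D: "\<forall>p\<in>{1..max i j}. (x p \<in> set L \<union> set R) \<noteq> (y p \<in> set L \<union> set R)"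
        unfolding Mtab_def by blast
      have inR: "\<And>p. Suc i \<le> p \<Longrightarrow> p \<le> j \<Longrightarrow> y p \<in> set R"
      proof -
        fix p assume p: "Suc i \<le> p" "p \<le> j"
        then have "p \<in> {1..max i j}" by auto
        moreover have "y p \<notin> set L" "x p \<notin> set L" "x p \<notin> set R"
          using yL[OF L] xL[OF L] xR[OF assms(6) R] p assms(6) by auto
        ultimately show "y p \<in> set R" using D by blast
      qed
      have chain: "\<forall>t. Suc i \<le> t \<and> t < j \<longrightarrow> E (y (Suc t)) (y t)"
      proof (intro allI impI)
        fix t assume t: "Suc i \<le> t \<and> t < j"
        show "E (y (Suc t)) (y t)"
        proof (rule path_consec[OF R Emono])
          show "y (Suc t) \<in> set R" "y t \<in> set R" using inR t by auto
          show "c (y (Suc t)) < c (y t)" using hy t assms(6) by auto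
          show "\<forall>z\<in>set R. \<not> (c (y (Suc t)) < c z \<and> c z < c (y t))"
            using bety RV[OF assms(6) R] t assms(6) by auto
        qed
      qed
      have "y (Suc i) \<in> set R" using inR lt by auto
      then obtain t where t: "t < length R" "R ! t = y (Suc i)" by (meson in_set_conv_nth)
      define R' where "R' = drop t R"
      have R': "is_path E (y (Suc i)) (y 0) R'" using path_drop[OF R t(1)] t R'_def by simp
      have sub: "set R' \<subseteq> set R" unfolding R'_def by (rule set_drop_subset)
      have "Mtab E x y i (Suc i)" unfolding Mtab_def
      proof (intro exI conjI ballI)
        show "is_path E (x 0) (x i) L" by (rule L)
        show "is_path E (y (Suc i)) (y 0) R'" by (rule R')
        fix p assume p: "p \<in> {1..max i (Suc i)}"
        show "(x p \<in> set L \<union> set R') \<noteq> (y p \<in> set L \<union> set R')"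
        proof (cases "p = Suc i")
          case True
          then have "y p \<in> set R'" using path_ends(1)[OF R'] by simp
          moreover have "x p \<notin> set L" "x p \<notin> set R'" using xL[OF L] xR[OF assms(6) R] sub True lt assms(6) by auto
          ultimately show ?thesis by blast
        next
          case False
          then have pj: "p \<le> i" "1 \<le> p" using p by auto
          then have "p \<in> {1..max i j}" using lt by auto
          then have Dp: "(x p \<in> set L \<union> set R) \<noteq> (y p \<in> set L \<union> set R)" using D by blast
          have "y p \<in> set R \<Longrightarrow> y p \<in> set R'"
            unfolding R'_def using path_drop_set[OF R Emono t(1)] t yle[of p "Suc i"] pj lt assms(6) by simp
          then have "(y p \<in> set L \<union> set R') = (y p \<in> set L \<union> set R)" using sub by blast
          moreover have "(x p \<in> set L \<union> set R') = (x p \<in> set L \<union> set R)"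
            using sub xR[OF assms(6) R, of p] pj lt assms(6) by auto
          ultimately show ?thesis using Dp by simp
        qed
      qed
      then show "Mtab E x y i (Suc i) \<and> (\<forall>t. Suc i \<le> t \<and> t < j \<longrightarrow> E (y (Suc t)) (y t))"
        using chain by simp
    next
      assume "Mtab E x y i (Suc i) \<and> (\<forall>t. Suc i \<le> t \<and> t < j \<longrightarrow> E (y (Suc t)) (y t))"
      then obtain L R' where L: "is_path E (x 0) (x i) L" and R': "is_path E (y (Suc i)) (y 0) R'"
        and D: "\<forall>p\<in>{1..max i (Suc i)}. (x p \<in> set L \<union> set R') \<noteq> (y p \<in> set L \<union> set R')"
        and chain: "\<forall>t. Suc i \<le> t \<and> t < j \<longrightarrow> E (y (Suc t)) (y t)"
        unfolding Mtab_def by blast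
      obtain R where R: "is_path E (y j) (y 0) R" and sR: "set R = set R' \<union> y ` {Suc (Suc i)..j}"
        using extend_bwd[of E y "Suc i" "y 0" R' j] R' chain lt by auto
      have si: "Suc i \<le> k" using lt assms(6) by simp
      show "Mtab E x y i j" unfolding Mtab_def
      proof (intro exI conjI ballI)
        show "is_path E (x 0) (x i) L" by (rule L)
        show "is_path E (y j) (y 0) R" by (rule R)
        fix p assume p: "p \<in> {1..max i j}"
        show "(x p \<in> set L \<union> set R) \<noteq> (y p \<in> set L \<union> set R)"
        proof (cases "p \<le> Suc i")
          case True
          then have Dp: "(x p \<in> set L \<union> set R') \<noteq> (y p \<in> set L \<union> set R')" using D p by auto
          have "y p \<notin> y ` {Suc (Suc i)..j}"
          proof
            assume "y p \<in> y ` {Suc (Suc i)..j}"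
            then obtain q where "q \<in> {Suc (Suc i)..j}" "y p = y q" by blast
            then show False using ylt[of p q] True assms(6) by auto
          qed
          moreover have "x p \<notin> y ` {Suc (Suc i)..j}"
          proof
            assume "x p \<in> y ` {Suc (Suc i)..j}"
            then obtain q where "q \<in> {Suc (Suc i)..j}" "x p = y q" by blast
            then show False using xylt[of p q] True si assms(6) by auto
          qed
          ultimately show ?thesis using Dp sR by auto
        next
          case False
          then have "y p \<in> set R" using sR p lt by auto
          moreover have "x p \<notin> set L" using xL[OF L] p False lt assms(6) by auto
          moreover have "x p \<notin> set R" using xR[OF assms(6) R] p lt assms(6) by auto
          ultimately show ?thesis by blast
        qed
      qed
    qed
    then show ?thesis using lt lce_y_ge[of i j E y] unfolding dia_y_def by auto
  qed
qed

end
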